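(* Let $0\le \ell<k$ be integers and $\gamma\ge 0$ a real number. If a $k$-graph $G$ with $m$ vertices and $e>0$ edges satisfies $\delta^+_\ell(G)\ge \gamma m^{k-\ell}/(k-\ell)!$, then $e\ge \gamma^{k/(k-\ell)} m^k/k!$.
   Context: A $k$-graph $G$ is a pair $(V(G),E(G))$ with $E(G)$ a collection of $k$-subsets of the finite set $V(G)$. The minimum positive $\ell$-degree $\delta^+_\ell(G)$ of a $k$-graph $G$ with at least one edge is the maximum $m$ such that every $\ell$-subset of $V(G)$ is contained in either no edges or at least $m$ edges of $G$. *)

theory Defs
  imports Complex_Main
begin

definition kgraph :: "nat \<Rightarrow> 'a set \<Rightarrow> 'a set set \<Rightarrow> bool" where
  "kgraph k V E \<longleftrightarrow> finite V \<and> (\<forall>e\<in>E. e \<subseteq> V \<and> card e = k)"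

definition hdeg :: "'a set set \<Rightarrow> 'a set \<Rightarrow> nat" where
  "hdeg E S = card {e \<in> E. S \<subseteq> e}"

definition min_pos_deg :: "'a set \<Rightarrow> 'a set set \<Rightarrow> nat \<Rightarrow> nat" where
  "min_pos_deg V E l = (GREATEST m. \<forall>S. S \<subseteq> V \<and> card S = l \<longrightarrow>
       hdeg E S = 0 \<or> m \<le> hdeg E S)"

end

theory Submission
  imports Defs
begin

lemma choose_le_pow_fact: "real (n choose r) \<le> real n ^ r / fact r"
proof (cases "r \<le> n")
  case True
  have "fact r * fact (n - r) * (n choose r) = (fact n :: nat)"
    using binomial_fact_lemma[OF True] .
  hence eq: "fact n = (fact r * (n choose r)) * (fact (n - r) :: nat)"
    by (simp add: ac_simps)
  have "fact n div fact (n - r) = fact r * (n choose r)"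
    unfolding eq by (rule nonzero_mult_div_cancel_right) simp
  hence "fact r * (n choose r) \<le> n ^ r" using fact_div_fact_le_pow[OF True] by simp
  hence "real (fact r * (n choose r)) \<le> real (n ^ r)" by (simp only: of_nat_le_iff)
  hence "fact r * real (n choose r) \<le> real n ^ r" by simp
  thus ?thesis by (simp add: pos_le_divide_eq mult.commute)
next
  case False
  hence "real (n choose r) = 0" by simp
  moreover have "0 \<le> real n ^ r / fact r" by (intro divide_nonneg_nonneg) simp_all
  ultimately show ?thesis by linarith
qed

lemma step:
  fixes x :: real
  assumes kg: "kgraph k V E" and jk: "Suc j < k" and x0: "x \<ge> 0"
    and IH: "\<And>T. card T = Suc j \<Longrightarrow> hdeg E T > 0 \<Longrightarrow>
               x ^ (k - Suc j) / fact (k - Suc j) \<le> real (hdeg E T)"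
    and cS: "card S = j" and pS: "hdeg E S > 0"
  shows "x ^ (k - j) / fact (k - j) \<le> real (hdeg E S)"
proof -
  define r where "r = k - Suc j"
  have r1: "r \<ge> 1" and kj: "k - j = Suc r" using jk by (auto simp: r_def)
  have finV: "finite V" and EV: "\<And>e. e \<in> E \<Longrightarrow> e \<subseteq> V \<and> card e = k"
    using kg by (auto simp: kgraph_def)
  have finE: "finite E"
    by (rule finite_subset[of E "Pow V"]) (use EV finV in auto)
  define A where "A = {e \<in> E. S \<subseteq> e}"
  have hA: "hdeg E S = card A" by (simp add: hdeg_def A_def)
  have finA: "finite A" using finE by (simp add: A_def)
  obtain e0 where e0: "e0 \<in> A" using pS hA card_gt_0_iff by fastforce
  have eA: "\<And>e. e \<in> A \<Longrightarrow> e \<in> E \<and> S \<subseteq> e \<and> e \<subseteq> V \<and> card e = k \<and> finite e"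
    using EV finV unfolding A_def by (auto intro: finite_subset[OF _ finV])
  have finS: "finite S" using eA[OF e0] finite_subset by blast
  define N where "N = \<Union>A - S"
  have "N \<subseteq> V" unfolding N_def using eA by blast
  hence finN: "finite N" using finV finite_subset by blast
  have claim1: "\<And>v. v \<in> N \<Longrightarrow> x ^ r / fact r \<le> real (hdeg E (insert v S))"
  proof -
    fix v assume v: "v \<in> N"
    then obtain e where e: "e \<in> A" "v \<in> e" "v \<notin> S" unfolding N_def by auto
    have "card (insert v S) = Suc j" using e(3) finS cS by simp
    moreover have "hdeg E (insert v S) > 0"
    proof -
      have "e \<in> {e \<in> E. insert v S \<subseteq> e}" using e eA by auto
      moreover have "finite {e \<in> E. insert v S \<subseteq> e}" using finE by simp
      ultimately show ?thesis unfolding hdeg_def using card_gt_0_iff by blast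
    qed
    ultimately show "x ^ r / fact r \<le> real (hdeg E (insert v S))" using IH r_def by simp
  qed
  have claimNe: "N \<noteq> {}"
  proof
    assume "N = {}"
    hence "e0 \<subseteq> S" using e0 unfolding N_def by auto
    hence "card e0 \<le> card S" using finS card_mono by blast
    thus False using eA[OF e0] cS jk by simp
  qed
  have claim4: "x \<le> real (card N)"
  proof -
    obtain v where v: "v \<in> N" using claimNe by auto
    define I where "I = insert v S"
    define B where "B = {e \<in> E. I \<subseteq> e}"
    have vS: "v \<notin> S" using v N_def by auto
    have cI: "card I = Suc j" using vS finS cS by (simp add: I_def)
    have finI: "finite I" using finS by (simp add: I_def)
    have maps: "(\<lambda>e. e - I) ` B \<subseteq> {T. T \<subseteq> N - {v} \<and> card T = r}"
    proof
      fix T assume "T \<in> (\<lambda>e. e - I) ` B"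
      then obtain e where e: "e \<in> B" "T = e - I" by auto
      have eA': "e \<in> A" using e(1) unfolding B_def A_def I_def by auto
      have "T \<subseteq> N - {v}" using e eA' unfolding N_def I_def by auto
      moreover have "card T = r"
        using e eA[OF eA'] cI finI unfolding B_def r_def
        by (simp add: card_Diff_subset)
      ultimately show "T \<in> {T. T \<subseteq> N - {v} \<and> card T = r}" by simp
    qed
    have inj: "inj_on (\<lambda>e. e - I) B"
      by (rule inj_onI) (auto simp: B_def)
    have "card B \<le> card {T. T \<subseteq> N - {v} \<and> card T = r}"
      using card_inj_on_le[OF inj maps] finN by simp
    also have "\<dots> = card (N - {v}) choose r" using n_subsets finN by blast
    finally have "real (card B) \<le> real (card (N - {v}) choose r)" by simp
    also have "\<dots> \<le> real (card (N - {v})) ^ r / fact r" by (rule choose_le_pow_fact)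
    finally have "x ^ r / fact r \<le> real (card (N - {v})) ^ r / fact r"
      using claim1[OF v] unfolding hdeg_def B_def I_def by linarith
    hence "x ^ r \<le> real (card (N - {v})) ^ r"
      by (simp add: divide_le_cancel)
    hence "x \<le> real (card (N - {v}))"
    proof -
      obtain r' where r': "r = Suc r'" using r1 by (cases r) auto
      show ?thesis
        by (rule power_le_imp_le_base[of _ r']) (use \<open>x ^ r \<le> _\<close> r' in simp_all)
    qed
    thus ?thesis using finN v by (simp add: card_Diff_singleton) 
  qed
  have count: "(\<Sum>v\<in>N. real (hdeg E (insert v S))) = real (card A) * real (Suc r)"
  proof -
    have "\<And>v. v \<in> N \<Longrightarrow> hdeg E (insert v S) = (\<Sum>e\<in>A. if v \<in> e then 1 else 0)"
    proof -
      fix v assume "v \<in> N"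
      have "hdeg E (insert v S) = card {e \<in> A. v \<in> e}"
        unfolding hdeg_def A_def by (rule arg_cong[where f=card]) auto
      also have "\<dots> = (\<Sum>e\<in>A. if v \<in> e then 1 else 0)"
      proof -
        have "{e \<in> A. v \<in> e} = A \<inter> {e. v \<in> e}" by blast
        moreover have "(\<Sum>e\<in>A. if v \<in> e then 1 else 0) = card (A \<inter> {e. v \<in> e})"
          using finA by (simp add: sum.If_cases)
        ultimately show ?thesis by simp
      qed
      finally show "hdeg E (insert v S) = (\<Sum>e\<in>A. if v \<in> e then 1 else 0)" .
    qed
    hence "(\<Sum>v\<in>N. hdeg E (insert v S)) = (\<Sum>v\<in>N. \<Sum>e\<in>A. if v \<in> e then 1 else 0)"
      by simp
    also have "\<dots> = (\<Sum>e\<in>A. \<Sum>v\<in>N. if v \<in> e then 1 else 0)" by (rule sum.swap)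
    also have "\<dots> = (\<Sum>e\<in>A. Suc r)"
    proof (rule sum.cong)
      fix e assume e: "e \<in> A"
      have "(\<Sum>v\<in>N. if v \<in> e then 1 else 0) = card (N \<inter> e)"
        using finN by (simp add: sum.If_cases)
      also have "N \<inter> e = e - S" using e unfolding N_def by auto
      also have "card (e - S) = Suc r"
        using eA[OF e] cS kj finS by (simp add: card_Diff_subset)
      finally show "(\<Sum>v\<in>N. if v \<in> e then 1 else 0) = Suc r" .
    qed simp
    finally have "(\<Sum>v\<in>N. hdeg E (insert v S)) = card A * Suc r" by simp
    hence "real (\<Sum>v\<in>N. hdeg E (insert v S)) = real (card A * Suc r)" by simp
    thus ?thesis by (simp add: algebra_simps)
  qed
  have "real (card N) * (x ^ r / fact r) \<le> (\<Sum>v\<in>N. real (hdeg E (insert v S)))"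
    using sum_mono[of N "\<lambda>v. x ^ r / fact r", OF claim1] by simp
  moreover have "x * (x ^ r / fact r) \<le> real (card N) * (x ^ r / fact r)"
    using claim4 x0 by (intro mult_right_mono) auto
  ultimately have "x ^ Suc r / fact r \<le> real (card A) * real (Suc r)"
    using count by simp
  hence lt: "(x ^ Suc r / fact r) / real (Suc r) \<le> real (card A)"
    by (simp only: pos_divide_le_eq of_nat_0_less_iff zero_less_Suc)
  have "x ^ Suc r / fact (Suc r) = x ^ Suc r / (real (Suc r) * fact r)"
    by (simp only: fact_Suc of_nat_mult of_nat_fact)
  also have "\<dots> = (x ^ Suc r / fact r) / real (Suc r)"
    by (simp only: divide_divide_eq_left mult.commute)
  also have "\<dots> \<le> real (card A)" by (rule lt)
  finally have "x ^ Suc r / fact (Suc r) \<le> real (card A)" .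
  thus ?thesis using kj hA by simp
qed


theorem lemma2p1:
  fixes V :: "'a set" and E :: "'a set set" and k l :: nat and \<gamma> :: real
  assumes "kgraph k V E"
    and "l < k"
    and "\<gamma> \<ge> 0"
    and "card E > 0"
    and "real (min_pos_deg V E l) \<ge> \<gamma> * real (card V) ^ (k - l) / fact (k - l)"
  shows "real (card E) \<ge> \<gamma> powr (real k / real (k - l)) * real (card V) ^ k / fact k"
proof (cases "\<gamma> = 0")
  case True
  thus ?thesis by simp
next
  case False
  hence g0: "\<gamma> > 0" using assms(3) by simp
  have kg: "kgraph k V E" by fact
  have finV: "finite V" and EV: "\<And>e. e \<in> E \<Longrightarrow> e \<subseteq> V \<and> card e = k"
    using kg by (auto simp: kgraph_def)
  have finE: "finite E"
    by (rule finite_subset[of E "Pow V"]) (use EV finV in auto)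
  define m where "m = real (card V)"
  define x where "x = \<gamma> powr (1 / real (k - l)) * m"
  have x0: "x \<ge> 0" unfolding x_def m_def by simp
  have xpow: "\<And>n. x ^ n = \<gamma> powr (real n / real (k - l)) * m ^ n"
  proof -
    fix n :: nat
    have "(\<gamma> powr (1 / real (k - l))) ^ n = (\<gamma> powr (1 / real (k - l))) powr real n"
      using g0 by (simp add: powr_realpow)
    also have "\<dots> = \<gamma> powr (real n / real (k - l))" by (simp add: powr_powr)
    finally show "x ^ n = \<gamma> powr (real n / real (k - l)) * m ^ n"
      unfolding x_def by (simp add: power_mult_distrib)
  qed
  have kl0: "real (k - l) > 0" using assms(2) by simp
  have "x ^ (k - l) = \<gamma> * m ^ (k - l)" using xpow[of "k - l"] kl0 g0 by simp
  define P where "P = (\<lambda>d. \<forall>S. S \<subseteq> V \<and> card S = l \<longrightarrow> hdeg E S = 0 \<or> d \<le> hdeg E S)"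
  have "E \<noteq> {}" using assms(4) by auto
  then obtain e where e: "e \<in> E" by blast
  have "l \<le> card e" using EV[OF e] assms(2) by simp
  then obtain S0 where S0: "S0 \<subseteq> e" "card S0 = l"
    by (rule obtain_subset_with_card_n)
  have S0V: "S0 \<subseteq> V" using S0 EV[OF e] by auto
  have hS0: "hdeg E S0 > 0"
  proof -
    have "e \<in> {e \<in> E. S0 \<subseteq> e}" using e S0 by auto
    moreover have "finite {e \<in> E. S0 \<subseteq> e}" using finE by simp
    ultimately show ?thesis unfolding hdeg_def using card_gt_0_iff by blast
  qed
  have P0: "P 0" unfolding P_def by simp
  have Pb: "y \<le> hdeg E S0" if "P y" for y
  proof -
    have "hdeg E S0 = 0 \<or> y \<le> hdeg E S0" using that S0V S0 unfolding P_def by blast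
    thus ?thesis using hS0 by simp
  qed
  have PG: "P (min_pos_deg V E l)"
    unfolding min_pos_deg_def P_def[symmetric] using GreatestI_nat[of P 0, OF P0 Pb] .
  have base: "\<And>S. card S = l \<Longrightarrow> hdeg E S > 0 \<Longrightarrow> x ^ (k - l) / fact (k - l) \<le> real (hdeg E S)"
  proof -
    fix S assume S: "card S = l" "hdeg E S > 0"
    have "{e \<in> E. S \<subseteq> e} \<noteq> {}"
    proof
      assume h: "{e \<in> E. S \<subseteq> e} = {}"
      have "hdeg E S = 0" unfolding hdeg_def h by simp
      thus False using S(2) by simp
    qed
    then obtain e' where "e' \<in> E" "S \<subseteq> e'" by blast
    hence "S \<subseteq> V" using EV by blast
    hence "min_pos_deg V E l \<le> hdeg E S" using PG S unfolding P_def by auto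
    hence "real (min_pos_deg V E l) \<le> real (hdeg E S)" by simp
    moreover have "x ^ (k - l) / fact (k - l) = \<gamma> * real (card V) ^ (k - l) / fact (k - l)"
      using \<open>x ^ (k - l) = \<gamma> * m ^ (k - l)\<close> m_def by simp
    ultimately show "x ^ (k - l) / fact (k - l) \<le> real (hdeg E S)" using assms(5) by linarith
  qed
  have ind: "\<And>t. t \<le> l \<Longrightarrow> (\<forall>S. card S = l - t \<longrightarrow> hdeg E S > 0 \<longrightarrow>
      x ^ (k - (l - t)) / fact (k - (l - t)) \<le> real (hdeg E S))"
  proof -
    fix t show "t \<le> l \<Longrightarrow> (\<forall>S. card S = l - t \<longrightarrow> hdeg E S > 0 \<longrightarrow>
      x ^ (k - (l - t)) / fact (k - (l - t)) \<le> real (hdeg E S))"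
    proof (induction t)
      case 0
      then show ?case using base by simp
    next
      case (Suc t)
      have sj: "Suc (l - Suc t) = l - t" using Suc.prems by simp
      have IH: "\<And>T. card T = Suc (l - Suc t) \<Longrightarrow> hdeg E T > 0 \<Longrightarrow>
          x ^ (k - Suc (l - Suc t)) / fact (k - Suc (l - Suc t)) \<le> real (hdeg E T)"
        using Suc.IH Suc.prems sj by simp
      have jk: "Suc (l - Suc t) < k" using sj assms(2) by simp
      show ?case using step[OF kg jk x0 IH] by blast
    qed
  qed
  have "hdeg E {} = card E" unfolding hdeg_def by simp
  have i0: "\<forall>S. card S = 0 \<longrightarrow> 0 < hdeg E S \<longrightarrow> x ^ k / fact k \<le> real (hdeg E S)"
    using ind[of l] by simp
  have "x ^ k / fact k \<le> real (hdeg E {})"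
    using i0[rule_format, of "{}"] \<open>hdeg E {} = card E\<close> assms(4) by simp
  hence "x ^ k / fact k \<le> real (card E)" using \<open>hdeg E {} = card E\<close> by simp
  moreover have "x ^ k = \<gamma> powr (real k / real (k - l)) * real (card V) ^ k"
    using xpow m_def by simp
  ultimately show ?thesis by simp
qed

end
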